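(* Let $X$ and $Y$ be topological spaces that are $T_1$ and regular, let $X$ be submetrizable, and let $f\colon X \to Y$ be a continuous surjective map which is closed and sequence-covering. Then $f$ is 1-sequence-covering.
   Context: A topological space $\langle X,\tau_X\rangle$ is submetrizable if there is a metrizable topology $\sigma$ on $X$ with $\sigma\subseteq\tau_X$ (equivalently, $X$ admits a continuous one-to-one map onto a metrizable space). A map is closed if images of closed sets are closed. For a space $Z$ and $z\in Z$, let $\mathsf{ConvSeq}(Z,z)$ denote the set of non-trivial (i.e. not eventually constant) sequences in $Z$ converging to $z$, and $\mathsf{ConvSeq}(Z)=\bigcup_{z\in Z}\mathsf{ConvSeq}(Z,z)$. For sequences $q=\langle q(n)\rangle_{n\in\omega}$ in $X$ and $p=\langle p(n)\rangle_{n\in\omega}$ in $Y$, say $q$ covers $p$ if $f(q(n))=p(n)$ for all $n\in\omega$. The map $f$ is sequence-covering if for every $p\in\mathsf{ConvSeq}(Y)$ there is $q\in\mathsf{ConvSeq}(X)$ covering $p$. The map $f$ is 1-sequence-covering if for every $y\in Y$ there is $x\in f^{-1}(y)$ such that for every $p\in\mathsf{ConvSeq}(Y,y)$ there is $q\in\mathsf{ConvSeq}(X,x)$ covering $p$. *)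

theory Defs
  imports "HOL-Analysis.Analysis"
begin

definition submetrizable :: "'a topology \<Rightarrow> bool" where
  "submetrizable X \<longleftrightarrow>
     (\<exists>S :: 'a topology. topspace S = topspace X \<and> metrizable_space S \<and>
        (\<forall>U. openin S U \<longrightarrow> openin X U))"

definition ConvSeq_at :: "'a topology \<Rightarrow> 'a \<Rightarrow> (nat \<Rightarrow> 'a) set" where
  "ConvSeq_at Z z = {q. (\<forall>n. q n \<in> topspace Z) \<and> limitin Z q z sequentially \<and>
                        \<not> (\<exists>c. eventually (\<lambda>n. q n = c) sequentially)}"

definition ConvSeq :: "'a topology \<Rightarrow> (nat \<Rightarrow> 'a) set" where
  "ConvSeq Z = (\<Union>z\<in>topspace Z. ConvSeq_at Z z)"

definition covers :: "('a \<Rightarrow> 'b) \<Rightarrow> (nat \<Rightarrow> 'a) \<Rightarrow> (nat \<Rightarrow> 'b) \<Rightarrow> bool" where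
  "covers f q p \<longleftrightarrow> (\<forall>n. f (q n) = p n)"

definition sequence_covering :: "'a topology \<Rightarrow> 'b topology \<Rightarrow> ('a \<Rightarrow> 'b) \<Rightarrow> bool" where
  "sequence_covering X Y f \<longleftrightarrow> (\<forall>p\<in>ConvSeq Y. \<exists>q\<in>ConvSeq X. covers f q p)"

definition one_sequence_covering :: "'a topology \<Rightarrow> 'b topology \<Rightarrow> ('a \<Rightarrow> 'b) \<Rightarrow> bool" where
  "one_sequence_covering X Y f \<longleftrightarrow>
     (\<forall>y\<in>topspace Y. \<exists>x\<in>topspace X. f x = y \<and>
        (\<forall>p\<in>ConvSeq_at Y y. \<exists>q\<in>ConvSeq_at X x. covers f q p))"

end

theory Submission
  imports Defs
begin

lemma subseq_exists:
  assumes "\<And>n N. \<exists>k>N. P n k"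
  shows "\<exists>r::nat\<Rightarrow>nat. strict_mono r \<and> (\<forall>n. P n (r n))"
proof -
  define r where "r = rec_nat (SOME k. P 0 k) (\<lambda>n rn. SOME k. k > rn \<and> P (Suc n) k)"
  have r0: "r 0 = (SOME k. P 0 k)" and rS: "\<And>n. r (Suc n) = (SOME k. k > r n \<and> P (Suc n) k)"
    by (simp_all add: r_def)
  have "P 0 (r 0)" unfolding r0 by (rule someI_ex) (use assms in blast)
  moreover have "r (Suc n) > r n \<and> P (Suc n) (r (Suc n))" for n
    unfolding rS by (rule someI_ex) (use assms in blast)
  ultimately have "\<forall>n. P n (r n)" by (metis old.nat.exhaust)
  moreover have "strict_mono r"
    using \<open>\<And>n. r (Suc n) > r n \<and> _\<close> by (simp add: strict_mono_Suc_iff)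
  ultimately show ?thesis by blast
qed

context
  fixes X :: "'a topology" and Y :: "'b topology" and f :: "'a \<Rightarrow> 'b"
    and M :: "'a set" and d :: "'a \<Rightarrow> 'a \<Rightarrow> real" and y :: 'b
  assumes ms: "Metric_space M d"
    and tsX: "topspace X = M"
    and coarse: "\<And>U. openin (Metric_space.mtopology M d) U \<Longrightarrow> openin X U"
    and hY: "Hausdorff_space Y"
    and cf: "continuous_map X Y f"
    and clf: "closed_map X Y f"
    and yY: "y \<in> topspace Y"
begin

abbreviation "MT \<equiv> Metric_space.mtopology M d"

lemma tsMT: "topspace MT = M"
  using ms by (simp add: Metric_space.topspace_mtopology)

lemma lim_coarse: "limitin X q x F \<Longrightarrow> limitin MT q x F"
  unfolding limitin_def using tsX tsMT coarse by auto

lemma cl_coarse: "X closure_of A \<subseteq> MT closure_of A"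
  unfolding in_closure_of subset_iff using tsX tsMT coarse by auto

lemma S1:
  fixes z :: "nat \<Rightarrow> 'a"
  assumes zM: "\<And>n. z n \<in> M" and lim: "limitin Y (f \<circ> z) y sequentially"
  shows "\<exists>w \<in> X closure_of range z. f w = y"
proof -
  have cl: "closedin Y (f ` (X closure_of range z))"
    using clf unfolding closed_map_def by simp
  moreover have "range z \<subseteq> X closure_of range z"
    using zM tsX by (intro closure_of_subset) auto
  moreover have "y \<in> Y closure_of (f ` range z)"
    unfolding in_closure_of
  proof (intro conjI allI impI)
    show "y \<in> topspace Y" by (rule yY)
    fix T assume T: "y \<in> T \<and> openin Y T"
    then have "eventually (\<lambda>n. (f \<circ> z) n \<in> T) sequentially"
      using lim unfolding limitin_def by blast
    then obtain n where "f (z n) \<in> T" by (auto simp: eventually_sequentially)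
    then show "\<exists>u. u \<in> f ` range z \<and> u \<in> T" by blast
  qed
  ultimately have "y \<in> Y closure_of (f ` (X closure_of range z))"
    using closure_of_mono[of "f ` range z" "f ` (X closure_of range z)" Y] by blast
  then have "y \<in> f ` (X closure_of range z)"
    using closure_of_closedin[OF cl] by simp
  then show ?thesis by blast
qed

lemma Cprime:
  fixes z :: "nat \<Rightarrow> 'a"
  assumes zM: "\<And>n. z n \<in> M" and zF: "\<And>n. f (z n) \<noteq> y"
    and lim: "limitin Y (f \<circ> z) y sequentially"
  shows "\<exists>r w. strict_mono r \<and> w \<in> M \<and> f w = y \<and> limitin MT (z \<circ> r) w sequentially"
proof -
  obtain w where wcl: "w \<in> X closure_of range z" and fw: "f w = y"
    using S1[OF zM lim] by blast
  have wM: "w \<in> M" using wcl closure_of_subset_topspace[of X "range z"] tsX by auto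
  have wMT: "w \<in> MT closure_of range z" using wcl cl_coarse by blast
  have close: "\<exists>n. d w (z n) < e" if "e > 0" for e
    using wMT that ms by (auto simp: Metric_space.metric_closure_of Metric_space.in_mball)
  have pos: "d w (z k) > 0" for k
    using Metric_space.mdist_pos_less[OF ms, of w "z k"] zM wM zF fw by metis
  have "\<exists>k>N. d w (z k) < 1/Suc n" for n N
  proof -
    define \<delta> where "\<delta> = Min (insert (1/Suc n) ((\<lambda>k. d w (z k)) ` {..N}))"
    have "\<delta> > 0" unfolding \<delta>_def using pos by (subst Min_gr_iff) auto
    then obtain k where k: "d w (z k) < \<delta>" using close by blast
    have "k > N"
    proof (rule ccontr)
      assume "\<not> N < k"
      then have "\<delta> \<le> d w (z k)" unfolding \<delta>_def by (intro Min_le) auto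
      with k show False by simp
    qed
    moreover have "\<delta> \<le> 1/Suc n" unfolding \<delta>_def by (intro Min_le) auto
    ultimately show ?thesis using k by auto
  qed
  then obtain r where r: "strict_mono r" "\<And>n. d w (z (r n)) < 1/Suc n"
    using subseq_exists[of "\<lambda>n k. d w (z k) < 1/Suc n"] by blast
  have "limitin MT (z \<circ> r) w sequentially"
    unfolding Metric_space.limitin_metric[OF ms]
  proof (intro conjI allI impI)
    fix e::real assume "e>0"
    then obtain N::nat where N: "1/Suc N < e" using nat_approx_posE by blast
    have "(z \<circ> r) n \<in> M \<and> d ((z \<circ> r) n) w < e" if "n \<ge> N" for n
    proof -
      have "1/real (Suc n) \<le> 1/Suc N" using that by (simp add: frac_le)
      then show ?thesis using r(2)[of n] N zM Metric_space.commute[OF ms, of w "z (r n)"] by auto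
    qed
    then show "\<forall>\<^sub>F n in sequentially. (z \<circ> r) n \<in> M \<and> d ((z \<circ> r) n) w < e"
      by (auto simp: eventually_sequentially)
  qed (rule wM)
  then show ?thesis using r wM fw by blast
qed

lemma Aprime:
  fixes z :: "nat \<Rightarrow> 'a"
  assumes zM: "\<And>n. z n \<in> M" and zF: "\<And>n. z n = x \<or> f (z n) \<noteq> y"
    and xM: "x \<in> M" and fx: "f x = y"
    and lim: "limitin Y (f \<circ> z) y sequentially" and limd: "limitin MT z x sequentially"
  shows "limitin X z x sequentially"
proof (rule ccontr)
  assume "\<not> limitin X z x sequentially"
  then obtain U where U: "openin X U" "x \<in> U" and ne: "\<not> eventually (\<lambda>n. z n \<in> U) sequentially"
    using xM tsX unfolding limitin_def by blast
  obtain r :: "nat \<Rightarrow> nat" where r: "strict_mono r" "\<And>n. z (r n) \<notin> U"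
    using not_eventually_sequentiallyD[OF ne] by auto
  have zrF: "f (z (r n)) \<noteq> y" for n using zF[of "r n"] r(2)[of n] U(2) by auto
  have lim2: "limitin Y (f \<circ> (z \<circ> r)) y sequentially"
    using limitin_subsequence[OF r(1) lim] by (simp add: o_assoc)
  obtain w where wcl: "w \<in> X closure_of range (z \<circ> r)" and fw: "f w = y"
    using S1[of "z \<circ> r", OF _ lim2] zM by auto
  have "X closure_of range (z \<circ> r) \<subseteq> topspace X - U"
    using r(2) zM tsX U(1) by (intro closure_of_minimal) auto
  then have wU: "w \<notin> U" using wcl by blast
  have "w \<in> MT closure_of range (z \<circ> r)" using wcl cl_coarse by blast
  moreover have "closedin MT (insert x (range (z \<circ> r)))"
  proof -
    have "range (z \<circ> r) \<subseteq> topspace MT" using zM tsMT by auto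
    then have "compactin MT (insert x (range (z \<circ> r)))"
      using compactin_sequence_with_limit[OF limitin_subsequence[OF r(1) limd]] by blast
    then show ?thesis
      using compactin_imp_closedin[OF Metric_space.Hausdorff_space_mtopology[OF ms]] by blast
  qed
  ultimately have "w \<in> insert x (range (z \<circ> r))"
    using closure_of_minimal[of "range (z \<circ> r)" "insert x (range (z \<circ> r))" MT] by blast
  then show False using wU U(2) fw zrF by auto
qed

lemma main_y:
  assumes sc: "sequence_covering X Y f" and surj: "f ` topspace X = topspace Y"
  shows "\<exists>x\<in>topspace X. f x = y \<and> (\<forall>p\<in>ConvSeq_at Y y. \<exists>q\<in>ConvSeq_at X x. covers f q p)"
proof -
  define P where "P = ConvSeq_at Y y"
  define G where "G p = {x \<in> M. f x = y \<and> (\<exists>q. (\<forall>n. q n \<in> M) \<and> covers f q p \<and> limitin MT q x sequentially)}" for p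
  have Pprops: "(\<forall>n. p n \<in> topspace Y) \<and> limitin Y p y sequentially \<and> \<not> (\<exists>c. eventually (\<lambda>n. p n = c) sequentially)"
    if "p \<in> P" for p using that by (auto simp: P_def ConvSeq_at_def)
  have good: "\<exists>q\<in>ConvSeq_at X x. covers f q p" if "p \<in> P" "x \<in> G p" for p x
  proof -
    from that(2) obtain q where q: "\<forall>n. q n \<in> M" "covers f q p" "limitin MT q x sequentially"
      and xM: "x \<in> M" and fx: "f x = y" by (auto simp: G_def)
    have pP: "\<forall>n. p n \<in> topspace Y" "limitin Y p y sequentially"
      "\<not> (\<exists>c. eventually (\<lambda>n. p n = c) sequentially)" using Pprops[OF that(1)] by auto
    define q' where "q' n = (if p n = y then x else q n)" for n
    have q'M: "q' n \<in> M" for n using q xM by (simp add: q'_def)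
    have cov: "covers f q' p" using q(2) fx by (auto simp: covers_def q'_def)
    then have fq': "f \<circ> q' = p" by (auto simp: covers_def)
    have q'F: "q' n = x \<or> f (q' n) \<noteq> y" for n using cov by (auto simp: covers_def q'_def)
    have limd: "limitin MT q' x sequentially"
      unfolding Metric_space.limitin_metric[OF ms]
    proof (intro conjI allI impI)
      fix e :: real assume e: "e > 0"
      have "eventually (\<lambda>n. q n \<in> M \<and> d (q n) x < e) sequentially"
        using q(3) e unfolding Metric_space.limitin_metric[OF ms] by blast
      then show "eventually (\<lambda>n. q' n \<in> M \<and> d (q' n) x < e) sequentially"
        by (rule eventually_mono) (use e xM ms in \<open>auto simp: q'_def Metric_space.mdist_zero\<close>)
    qed (rule xM)
    have limX: "limitin X q' x sequentially"
      using Aprime[OF q'M q'F xM fx _ limd] fq' pP(2) by simp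
    have "q' \<in> ConvSeq_at X x"
      unfolding ConvSeq_at_def
    proof (intro CollectI conjI allI notI)
      fix n show "q' n \<in> topspace X" using q'M tsX by simp
    next
      show "limitin X q' x sequentially" by (rule limX)
    next
      assume "\<exists>c. eventually (\<lambda>n. q' n = c) sequentially"
      then obtain c where "eventually (\<lambda>n. q' n = c) sequentially" by blast
      then have "eventually (\<lambda>n. p n = f c) sequentially"
        by (rule eventually_mono) (use cov in \<open>auto simp: covers_def\<close>)
      then show False using pP(3) by blast
    qed
    then show ?thesis using cov by blast
  qed
  have ne: "G p \<noteq> {}" if "p \<in> P" for p
  proof -
    have "p \<in> ConvSeq Y" using that yY by (auto simp: P_def ConvSeq_def)
    then obtain q where q: "q \<in> ConvSeq X" "covers f q p" using sc by (auto simp: sequence_covering_def)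
    then obtain x where x: "x \<in> topspace X" "q \<in> ConvSeq_at X x" by (auto simp: ConvSeq_def)
    have limq: "limitin X q x sequentially" and qM: "\<forall>n. q n \<in> M"
      using x(2) tsX by (auto simp: ConvSeq_at_def)
    have "limitin Y (f \<circ> q) (f x) sequentially" using continuous_map_limit[OF cf limq] .
    moreover have "f \<circ> q = p" using q(2) by (auto simp: covers_def)
    moreover have "limitin Y p y sequentially" using Pprops[OF that] by blast
    ultimately have "f x = y" using limitin_Hausdorff_unique[OF _ _ _ hY] by (metis trivial_limit_sequentially)
    then have "x \<in> G p" using x(1) tsX qM q(2) lim_coarse[OF limq] by (auto simp: G_def)
    then show ?thesis by blast
  qed
  have Gchoice: "\<exists>Q. \<forall>n. (\<forall>k. Q n k \<in> M) \<and> covers f (Q n) p \<and> limitin MT (Q n) (\<sigma> n) sequentially"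
    if "\<forall>n. \<sigma> n \<in> G p" for p and \<sigma> :: "nat \<Rightarrow> 'a"
  proof -
    have "\<forall>n. \<exists>q. (\<forall>k. q k \<in> M) \<and> covers f q p \<and> limitin MT q (\<sigma> n) sequentially"
      using that by (auto simp: G_def)
    then show ?thesis by (rule choice)
  qed
  have clo: "w \<in> G p" if H: "w \<in> M" "f w = y" "\<forall>n. \<sigma> n \<in> G p" "limitin MT \<sigma> w sequentially"
    for p w and \<sigma> :: "nat \<Rightarrow> 'a"
  proof -
    obtain Q where Q: "\<forall>n. (\<forall>k. Q n k \<in> M) \<and> covers f (Q n) p \<and> limitin MT (Q n) (\<sigma> n) sequentially"
      using Gchoice[OF H(3)] by blast
    define j where "j k = arg_min_on (\<lambda>n. d (Q n k) w) {..k}" for k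
    define q where "q k = Q (j k) k" for k
    have jk: "\<forall>n\<in>{..k}. d (q k) w \<le> d (Q n k) w" for k
      using arg_min_if_finite(2)[of "{..k}" "\<lambda>n. d (Q n k) w"] by (auto simp: j_def q_def not_less)
    have qM: "\<forall>k. q k \<in> M" using Q by (auto simp: q_def)
    have cov: "covers f q p" using Q by (auto simp: q_def covers_def)
    have "limitin MT q w sequentially"
      unfolding Metric_space.limitin_metric[OF ms]
    proof (intro conjI allI impI)
      fix e :: real assume e: "e > 0"
      have "eventually (\<lambda>n. \<sigma> n \<in> M \<and> d (\<sigma> n) w < e/2) sequentially"
        using H(4) e unfolding Metric_space.limitin_metric[OF ms] by (meson half_gt_zero)
      then obtain n where n: "d (\<sigma> n) w < e/2" "\<sigma> n \<in> M" by (auto simp: eventually_sequentially)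
      have "eventually (\<lambda>k. Q n k \<in> M \<and> d (Q n k) (\<sigma> n) < e/2) sequentially"
        using Q e unfolding Metric_space.limitin_metric[OF ms] by (meson half_gt_zero)
      then obtain K where K: "\<forall>k\<ge>K. d (Q n k) (\<sigma> n) < e/2" by (auto simp: eventually_sequentially)
      show "eventually (\<lambda>k. q k \<in> M \<and> d (q k) w < e) sequentially"
        unfolding eventually_sequentially
      proof (intro exI[of _ "max n K"] allI impI)
        fix k assume k: "max n K \<le> k"
        have "d (q k) w \<le> d (Q n k) w" using jk[of k] k by auto
        also have "\<dots> \<le> d (Q n k) (\<sigma> n) + d (\<sigma> n) w"
          using Metric_space.triangle[OF ms] Q n H(1) by blast
        also have "\<dots> < e" using K k n by auto
        finally show "q k \<in> M \<and> d (q k) w < e" using qM by auto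
      qed
    qed (rule H(1))
    then show ?thesis using H(1,2) qM cov by (auto simp: G_def)
  qed
  have cpt: "compactin MT (G p)" if pP: "p \<in> P" for p
    unfolding Metric_space.compactin_sequentially[OF ms]
  proof (intro conjI allI impI)
    show "G p \<subseteq> M" by (auto simp: G_def)
    fix \<sigma> :: "nat \<Rightarrow> 'a" assume \<sigma>: "range \<sigma> \<subseteq> G p"
    then have \<sigma>G: "\<forall>n. \<sigma> n \<in> G p" by auto
    obtain Q where Q: "\<forall>n. (\<forall>k. Q n k \<in> M) \<and> covers f (Q n) p \<and> limitin MT (Q n) (\<sigma> n) sequentially"
      using Gchoice[OF \<sigma>G] by blast
    have \<sigma>M: "\<sigma> n \<in> M" for n using \<sigma>G by (auto simp: G_def)
    have pnt: "\<exists>k\<ge>N. p k \<noteq> y" for N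
    proof (rule ccontr)
      assume "\<not> (\<exists>k\<ge>N. p k \<noteq> y)"
      then have "eventually (\<lambda>k. p k = y) sequentially" by (auto simp: eventually_sequentially)
      then show False using Pprops[OF pP] by blast
    qed
    have "\<exists>k\<ge>n. p k \<noteq> y \<and> d (Q n k) (\<sigma> n) < 1/Suc n" for n
    proof -
      have "eventually (\<lambda>k. Q n k \<in> M \<and> d (Q n k) (\<sigma> n) < 1/Suc n) sequentially"
      proof -
        have "(0::real) < 1/Suc n" by simp
        then show ?thesis using Q unfolding Metric_space.limitin_metric[OF ms] by blast
      qed
      then obtain K where K: "\<forall>k\<ge>K. d (Q n k) (\<sigma> n) < 1/Suc n" by (auto simp: eventually_sequentially)
      obtain k where "k \<ge> max n K" "p k \<noteq> y" using pnt by blast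
      then show ?thesis using K by auto
    qed
    then obtain kk where kk: "\<forall>n. kk n \<ge> n \<and> p (kk n) \<noteq> y \<and> d (Q n (kk n)) (\<sigma> n) < 1/Suc n"
      by metis
    define z where "z n = Q n (kk n)" for n
    have zM: "z n \<in> M" for n using Q by (simp add: z_def)
    have fz: "f (z n) = p (kk n)" for n using Q by (simp add: z_def covers_def)
    have zF: "f (z n) \<noteq> y" for n using kk fz by simp
    have limz: "limitin Y (f \<circ> z) y sequentially"
      unfolding limitin_def
    proof (intro conjI allI impI)
      show "y \<in> topspace Y" by (rule yY)
      fix U assume U: "openin Y U \<and> y \<in> U"
      then have "eventually (\<lambda>n. p n \<in> U) sequentially" using Pprops[OF pP] unfolding limitin_def by blast
      then obtain N where N: "\<forall>n\<ge>N. p n \<in> U" by (auto simp: eventually_sequentially)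
      have "\<forall>n\<ge>N. (f \<circ> z) n \<in> U" using N kk fz by (metis comp_apply order.trans)
      then show "eventually (\<lambda>n. (f \<circ> z) n \<in> U) sequentially" by (auto simp: eventually_sequentially)
    qed
    obtain r w where r: "strict_mono r" "w \<in> M" "f w = y" "limitin MT (z \<circ> r) w sequentially"
      using Cprime[OF zM zF limz] by blast
    have "limitin MT (\<sigma> \<circ> r) w sequentially"
      unfolding Metric_space.limitin_metric[OF ms]
    proof (intro conjI allI impI)
      fix e :: real assume e: "e > 0"
      have "eventually (\<lambda>n. (z \<circ> r) n \<in> M \<and> d ((z \<circ> r) n) w < e/2) sequentially"
        using r(4) e unfolding Metric_space.limitin_metric[OF ms] by (meson half_gt_zero)
      then obtain N1 where N1: "\<forall>n\<ge>N1. d (z (r n)) w < e/2" by (auto simp: eventually_sequentially)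
      obtain N2 :: nat where N2: "1/Suc N2 < e/2" using nat_approx_posE[of "e/2"] e by auto
      show "eventually (\<lambda>n. (\<sigma> \<circ> r) n \<in> M \<and> d ((\<sigma> \<circ> r) n) w < e) sequentially"
        unfolding eventually_sequentially
      proof (intro exI[of _ "max N1 N2"] allI impI)
        fix n assume n: "max N1 N2 \<le> n"
        have rn: "n \<le> r n" using seq_suble[OF r(1)] by blast
        have "1/real (Suc (r n)) \<le> 1/Suc N2" using n rn by (simp add: frac_le)
        then have a: "d (z (r n)) (\<sigma> (r n)) < e/2"
          using kk[rule_format, of "r n"] N2 Metric_space.commute[OF ms] by (simp add: z_def)
        have "d (\<sigma> (r n)) w \<le> d (\<sigma> (r n)) (z (r n)) + d (z (r n)) w"
          using Metric_space.triangle[OF ms] \<sigma>M zM r(2) by blast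
        also have "\<dots> < e" using a N1 n Metric_space.commute[OF ms, of "\<sigma> (r n)" "z (r n)"] by auto
        finally show "(\<sigma> \<circ> r) n \<in> M \<and> d ((\<sigma> \<circ> r) n) w < e" using \<sigma>M by simp
      qed
    qed (rule r(2))
    then have "w \<in> G p" using clo[of w "\<sigma> \<circ> r" p] r \<sigma>G by auto
    then show "\<exists>l r. l \<in> G p \<and> strict_mono r \<and> limitin MT (\<sigma> \<circ> r) l sequentially"
      using r(1) \<open>limitin MT (\<sigma> \<circ> r) w sequentially\<close> by blast
  qed
  have dir: "\<exists>p\<in>P. G p \<subseteq> G p1 \<inter> G p2" if p1P: "p1 \<in> P" and p2P: "p2 \<in> P" for p1 p2
  proof -
    define p where "p n = (if even n then p1 (n div 2) else p2 (n div 2))" for n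
    have p1e: "p (2*n) = p1 n" and p2o: "p (2*n+1) = p2 n" for n by (simp_all add: p_def)
    have pP: "p \<in> P"
      unfolding P_def ConvSeq_at_def
    proof (intro CollectI conjI allI notI)
      fix n show "p n \<in> topspace Y" using Pprops[OF p1P] Pprops[OF p2P] by (simp add: p_def)
    next
      show "limitin Y p y sequentially"
        unfolding limitin_def
      proof (intro conjI allI impI)
        show "y \<in> topspace Y" by (rule yY)
        fix U assume U: "openin Y U \<and> y \<in> U"
        then obtain N1 N2 where N1: "\<forall>n\<ge>N1. p1 n \<in> U" and N2: "\<forall>n\<ge>N2. p2 n \<in> U"
          using Pprops[OF p1P] Pprops[OF p2P] unfolding limitin_def eventually_sequentially by meson
        have "\<forall>n\<ge>2*(N1+N2). p n \<in> U"
        proof (intro allI impI)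
          fix n assume "2*(N1+N2) \<le> n"
          then have "n div 2 \<ge> N1" "n div 2 \<ge> N2" by presburger+
          then show "p n \<in> U" using N1 N2 by (simp add: p_def)
        qed
        then show "eventually (\<lambda>n. p n \<in> U) sequentially" by (auto simp: eventually_sequentially)
      qed
    next
      assume "\<exists>c. eventually (\<lambda>n. p n = c) sequentially"
      then obtain c N where N: "\<forall>n\<ge>N. p n = c" by (auto simp: eventually_sequentially)
      then have "\<forall>n\<ge>N. p1 n = c" by (metis p1e le_add2 mult_2 order.trans)
      then have "eventually (\<lambda>n. p1 n = c) sequentially" by (auto simp: eventually_sequentially)
      then show False using Pprops[OF p1P] by blast
    qed
    have sm1: "strict_mono (\<lambda>n::nat. 2*n)" and sm2: "strict_mono (\<lambda>n::nat. 2*n+1)"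
      by (auto simp: strict_mono_def)
    have "G p \<subseteq> G p1 \<inter> G p2"
    proof
      fix x assume "x \<in> G p"
      then obtain q where x: "x \<in> M" "f x = y" and q: "\<forall>n. q n \<in> M" "covers f q p" "limitin MT q x sequentially"
        by (auto simp: G_def)
      have "covers f (q \<circ> (\<lambda>n. 2*n)) p1" "covers f (q \<circ> (\<lambda>n. 2*n+1)) p2"
        using q(2) p1e p2o by (auto simp: covers_def)
      moreover have "limitin MT (q \<circ> (\<lambda>n. 2*n)) x sequentially" "limitin MT (q \<circ> (\<lambda>n. 2*n+1)) x sequentially"
        using limitin_subsequence[OF sm1 q(3)] limitin_subsequence[OF sm2 q(3)] by auto
      moreover have "\<forall>n. (q \<circ> (\<lambda>n. 2*n)) n \<in> M" "\<forall>n. (q \<circ> (\<lambda>n. 2*n+1)) n \<in> M"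
        using q(1) by auto
      ultimately show "x \<in> G p1 \<inter> G p2" using x unfolding G_def by blast
    qed
    then show ?thesis using pP by blast
  qed
  show ?thesis
  proof (cases "P = {}")
    case True
    obtain x where "x \<in> topspace X" "f x = y" using surj yY by (metis imageE)
    then show ?thesis using True by (auto simp: P_def)
  next
    case False
    then obtain p0 where p0: "p0 \<in> P" by blast
    have fin: "\<exists>p\<in>P. G p \<subseteq> G p0 \<inter> \<Inter> (G ` Q)" if "finite Q" "Q \<subseteq> P" for Q
      using that
    proof (induction Q rule: finite_induct)
      case empty then show ?case using p0 by auto
    next
      case (insert a Q)
      then obtain pp where pp1: "pp \<in> P" and pp2: "G pp \<subseteq> G p0 \<inter> \<Inter> (G ` Q)" by auto
      have "a \<in> P" using insert by auto
      then obtain p' where "p' \<in> P" "G p' \<subseteq> G pp \<inter> G a" using dir[OF pp1] by blast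
      then have "p' \<in> P \<and> G p' \<subseteq> G p0 \<inter> \<Inter> (G ` (insert a Q))" using pp2 by blast
      then show ?case by blast
    qed
    have "G p0 \<inter> \<Inter> (G ` P) \<noteq> {}"
    proof (rule compactin_fip[THEN iffD1, OF cpt[OF p0], THEN conjunct2, rule_format], intro conjI ballI allI impI)
      fix C assume "C \<in> G ` P"
      then show "closedin MT C"
        using cpt compactin_imp_closedin Metric_space.Hausdorff_space_mtopology[OF ms] by blast
    next
      fix \<F> assume F: "finite \<F> \<and> \<F> \<subseteq> G ` P"
      then obtain Q where Q: "Q \<subseteq> P" "finite Q" "\<F> = G ` Q" using finite_subset_image by meson
      then obtain p where "p \<in> P" "G p \<subseteq> G p0 \<inter> \<Inter> (G ` Q)" using fin by blast
      then show "G p0 \<inter> \<Inter> \<F> \<noteq> {}" using ne Q by blast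
    qed
    then obtain x where x: "x \<in> G p0" "\<forall>p\<in>P. x \<in> G p" by blast
    then have "x \<in> topspace X" "f x = y" using tsX by (auto simp: G_def)
    then show ?thesis using x good by (auto simp: P_def)
  qed
qed

end

theorem mainTheorem1:
  fixes X :: "'a topology" and Y :: "'b topology" and f :: "'a \<Rightarrow> 'b"
  assumes "t1_space X" and "regular_space X"
    and "t1_space Y" and "regular_space Y"
    and "submetrizable X"
    and "continuous_map X Y f"
    and "f ` topspace X = topspace Y"
    and "closed_map X Y f"
    and "sequence_covering X Y f"
  shows "one_sequence_covering X Y f"
proof -
  obtain S where S: "topspace S = topspace X" "metrizable_space S" "\<And>U. openin S U \<Longrightarrow> openin X U"
    using assms(5) unfolding submetrizable_def by blast
  obtain M d where ms: "Metric_space M d" and SM: "S = Metric_space.mtopology M d"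
    using S(2) unfolding metrizable_space_def by blast
  have tsX: "topspace X = M" using S(1) SM Metric_space.topspace_mtopology[OF ms] by simp
  have hY: "Hausdorff_space Y" using assms(3,4) regular_t1_imp_Hausdorff_space by blast
  show ?thesis
    unfolding one_sequence_covering_def
  proof
    fix y assume yY: "y \<in> topspace Y"
    show "\<exists>x\<in>topspace X. f x = y \<and> (\<forall>p\<in>ConvSeq_at Y y. \<exists>q\<in>ConvSeq_at X x. covers f q p)"
      using main_y[OF ms tsX _ hY assms(6) assms(8) yY assms(9) assms(7)] S(3) SM by blast
  qed
qed

end
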